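(* Let $G=(A,B;E)$ be the incidence graph of a finite set $A$ of points and a finite set $B$ of open axis-parallel rectangles in $\mathbb{R}^2$, and let $k$ be a positive integer. Then $G\otimes k$ is isomorphic to the incidence graph of some finite set of points and some finite set of open axis-parallel rectangles in $\mathbb{R}^2$.
   Context: The incidence graph of points $P$ and rectangles $\mathcal{R}$ is the bipartite graph with classes $P$, $\mathcal{R}$, where $p$ and $R$ are adjacent iff $p\in R$. For a bipartite graph $G=(A,B;E)$ and positive integer $k$, $G\otimes k$ is the bipartite graph with vertex classes $A\times[k]$ and $(B\times[k])\cup A'$, where $A'$ is a disjoint copy of $A$; $(u,i)\in A\times[k]$ and $(v,j)\in B\times[k]$ are adjacent iff $i=j$ and $\{u,v\}\in E$; $(u,i)\in A\times[k]$ and $v\in A'$ are adjacent iff $v$ is the copy of $u$; there are no other edges. *)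

theory Defs
  imports Main "HOL.Real"
begin

type_synonym point = "real \<times> real"

definition open_rect :: "point set \<Rightarrow> bool" where
  "open_rect R \<longleftrightarrow> (\<exists>a b c d. a < b \<and> c < d \<and> R = {a<..<b} \<times> {c<..<d})"

(* A bipartite graph is given by its two vertex classes A, B and an
   adjacency relation E between A and B.  The incidence graph of points P
   and rectangles \<R> is (P, \<R>, \<lambda>p R. p \<in> R). *)
definition incidence :: "point \<Rightarrow> point set \<Rightarrow> bool" where
  "incidence p R \<longleftrightarrow> p \<in> R"

(* G \<otimes> k for G = (A,B;E): classes A \<times> [k] and (B \<times> [k]) \<union> A',
   where the disjoint union is modelled by the sum type (Inl for B \<times> [k],
   Inr for the copy A' of A). *)
definition tensorA :: "'a set \<Rightarrow> nat \<Rightarrow> ('a \<times> nat) set" where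
  "tensorA A k = A \<times> {1..k}"

definition tensorB :: "'a set \<Rightarrow> 'b set \<Rightarrow> nat \<Rightarrow> (('b \<times> nat) + 'a) set" where
  "tensorB A B k = Inl ` (B \<times> {1..k}) \<union> Inr ` A"

fun tensorE :: "('a \<Rightarrow> 'b \<Rightarrow> bool) \<Rightarrow> ('a \<times> nat) \<Rightarrow> (('b \<times> nat) + 'a) \<Rightarrow> bool" where
  "tensorE E (u, i) (Inl (v, j)) \<longleftrightarrow> i = j \<and> E u v"
| "tensorE E (u, i) (Inr v) \<longleftrightarrow> v = u"

definition bip_iso ::
  "'a set \<Rightarrow> 'b set \<Rightarrow> ('a \<Rightarrow> 'b \<Rightarrow> bool) \<Rightarrow> 'c set \<Rightarrow> 'd set \<Rightarrow> ('c \<Rightarrow> 'd \<Rightarrow> bool) \<Rightarrow> bool" where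
  "bip_iso A B E C D F \<longleftrightarrow>
     (\<exists>f g. bij_betw f A C \<and> bij_betw g B D \<and>
            (\<forall>x\<in>A. \<forall>y\<in>B. E x y \<longleftrightarrow> F (f x) (g y)))"

end

theory Submission imports Defs begin
lemma ivl_eq:
  fixes a b c d :: real
  assumes "a < b" "{a<..<b} = {c<..<d}"
  shows "a = c \<and> b = d"
proof -
  have "{a<..<b} \<noteq> {}" using assms(1) by simp
  then have "{c<..<d} \<noteq> {}" using assms(2) by simp
  then have "c < d" by simp
  then show ?thesis using assms
    by (metis cInf_greaterThanLessThan cSup_greaterThanLessThan)
qed

lemma box_eq:
  fixes a b c d a' b' c' d' :: real
  assumes "a < b" "c < d" "{a<..<b} \<times> {c<..<d} = {a'<..<b'} \<times> {c'<..<d'}"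
  shows "a = a' \<and> b = b' \<and> c = c' \<and> d = d'"
proof -
  have "{a<..<b} \<noteq> {}" "{c<..<d} \<noteq> {}" using assms by auto
  then have "{a<..<b} = {a'<..<b'} \<and> {c<..<d} = {c'<..<d'}" using assms(3) times_eq_iff by metis
  then show ?thesis using ivl_eq assms by metis
qed

lemma get_bounds:
  assumes "\<forall>R\<in>S. open_rect R"
  obtains a b c d where "\<forall>R\<in>S. a R < b R \<and> c R < d R \<and> R = {a R<..<b R} \<times> {c R<..<d R}"
  using assms unfolding open_rect_def by metis

lemma finite_gaps:
  fixes X :: "real set"
  assumes "finite X"
  shows "finite ({\<bar>u - v\<bar> | u v. u \<in> X \<and> v \<in> X \<and> u \<noteq> v} \<union> {1})"
proof -
  have "{\<bar>u - v\<bar> | u v. u \<in> X \<and> v \<in> X \<and> u \<noteq> v} \<subseteq> (\<lambda>(u,v). \<bar>u - v\<bar>) ` (X \<times> X)"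
    by auto
  then show ?thesis using assms by (meson finite_SigmaI finite_Un finite_imageI finite_subset finite.intros)
qed

lemma gap_min:
  fixes X :: "real set"
  assumes "finite X"
  defines "G \<equiv> Min ({\<bar>u - v\<bar> | u v. u \<in> X \<and> v \<in> X \<and> u \<noteq> v} \<union> {1})"
  shows "G > 0" and "\<And>u v. u \<in> X \<Longrightarrow> v \<in> X \<Longrightarrow> u \<noteq> v \<Longrightarrow> G \<le> \<bar>u - v\<bar>"
proof -
  let ?S = "{\<bar>u - v\<bar> | u v. u \<in> X \<and> v \<in> X \<and> u \<noteq> v} \<union> {1}"
  have fin: "finite ?S" using finite_gaps[OF assms(1)] .
  have "G \<in> ?S" unfolding G_def using fin by (intro Min_in) auto
  then show "G > 0" by auto
  fix u v assume "u \<in> X" "v \<in> X" "u \<noteq> v"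
  then have "\<bar>u - v\<bar> \<in> ?S" by blast
  then show "G \<le> \<bar>u - v\<bar>" unfolding G_def using fin by (intro Min_le) auto
qed

theorem lemma5p4:
  fixes P :: "point set" and \<R> :: "point set set" and k :: nat
  assumes "finite P" and "finite \<R>" and "\<forall>R\<in>\<R>. open_rect R" and "k > 0"
  shows "\<exists>(P' :: point set) (\<R>' :: point set set).
           finite P' \<and> finite \<R>' \<and> (\<forall>R\<in>\<R>'. open_rect R) \<and>
           bip_iso (tensorA P k) (tensorB P \<R> k) (tensorE incidence) P' \<R>' incidence"
proof -
  obtain a b c d where rect: "\<forall>R\<in>\<R>. a R < b R \<and> c R < d R \<and> R = {a R<..<b R} \<times> {c R<..<d R}"
    using get_bounds[OF assms(3)] by blast
  define Xs where "Xs = fst ` P \<union> a ` \<R> \<union> b ` \<R>"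
  have finXs: "finite Xs" unfolding Xs_def using assms(1,2) by auto
  define D where "D = Min ({\<bar>u - v\<bar> | u v. u \<in> Xs \<and> v \<in> Xs \<and> u \<noteq> v} \<union> {1})"
  have Dpos: "D > 0" unfolding D_def using gap_min(1)[OF finXs] .
  have Dgap: "\<And>u v. u \<in> Xs \<Longrightarrow> v \<in> Xs \<Longrightarrow> u \<noteq> v \<Longrightarrow> D \<le> \<bar>u - v\<bar>"
    unfolding D_def using gap_min(2)[OF finXs] by blast
  define Ys where "Ys = snd ` P \<union> c ` \<R> \<union> d ` \<R>"
  have finYs: "finite Ys" unfolding Ys_def using assms(1,2) by auto
  define M where "M = (\<Sum>y\<in>Ys. \<bar>y\<bar>)"
  have Mb: "\<And>y. y \<in> Ys \<Longrightarrow> \<bar>y\<bar> \<le> M"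
    unfolding M_def using finYs by (intro member_le_sum) auto
  have M0: "M \<ge> 0" unfolding M_def by (intro sum_nonneg) auto
  define \<epsilon> where "\<epsilon> = D / (8 * (M + 1))"
  have epos: "\<epsilon> > 0" unfolding \<epsilon>_def using Dpos M0 by simp
  have eb: "\<bar>\<epsilon> * y\<bar> \<le> D / 8" if "y \<in> Ys" for y
  proof -
    have "\<bar>\<epsilon> * y\<bar> = \<epsilon> * \<bar>y\<bar>" using epos by (simp add: abs_mult)
    also have "\<dots> \<le> \<epsilon> * (M + 1)" using Mb[OF that] epos by (intro mult_left_mono) auto
    also have "\<dots> = D / 8" unfolding \<epsilon>_def using M0 by (simp add: field_simps)
    finally show ?thesis .
  qed
  define xp where "xp p = fst p + \<epsilon> * snd p" for p :: point
  define T where "T = 2 * M + 1"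
  have Tpos: "T > 0" unfolding T_def using M0 by simp
  have PX: "fst p \<in> Xs" "snd p \<in> Ys" if "p \<in> P" for p using that unfolding Xs_def Ys_def by auto
  have RX: "a R \<in> Xs" "b R \<in> Xs" "c R \<in> Ys" "d R \<in> Ys" if "R \<in> \<R>" for R
    using that unfolding Xs_def Ys_def by auto
  have xin: "(a R < fst p \<and> fst p < b R) \<longleftrightarrow> (a R + D/4 < xp p \<and> xp p < b R - D/4)"
    if "p \<in> P" "R \<in> \<R>" for p R
  proof -
    have e: "\<bar>\<epsilon> * snd p\<bar> \<le> D/8" using eb PX(2)[OF that(1)] .
    have A: "a R < fst p \<longleftrightarrow> a R + D/4 < xp p"
    proof (cases "a R < fst p")
      case True
      then have "D \<le> \<bar>fst p - a R\<bar>" using Dgap[OF PX(1)[OF that(1)] RX(1)[OF that(2)]] by simp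
      then show ?thesis using True e unfolding xp_def by (auto simp: abs_if split: if_splits)
    next
      case False
      then show ?thesis using e Dpos unfolding xp_def by (auto simp: abs_if split: if_splits)
    qed
    have B: "fst p < b R \<longleftrightarrow> xp p < b R - D/4"
    proof (cases "fst p < b R")
      case True
      then have "D \<le> \<bar>fst p - b R\<bar>" using Dgap[OF PX(1)[OF that(1)] RX(2)[OF that(2)]] by simp
      then show ?thesis using True e unfolding xp_def by (auto simp: abs_if split: if_splits)
    next
      case False
      then show ?thesis using e Dpos unfolding xp_def by (auto simp: abs_if split: if_splits)
    qed
    show ?thesis using A B by blast
  qed
  have xinj: "p = q" if "p \<in> P" "q \<in> P" "xp p = xp q" for p q
  proof (cases "fst p = fst q")
    case True
    then have "\<epsilon> * snd p = \<epsilon> * snd q" using that(3) unfolding xp_def by simp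
    then have "snd p = snd q" using epos by simp
    then show ?thesis using True by (simp add: prod_eq_iff)
  next
    case False
    have "D \<le> \<bar>fst p - fst q\<bar>" using Dgap[OF PX(1)[OF that(1)] PX(1)[OF that(2)] False] .
    moreover have "\<bar>\<epsilon> * snd p\<bar> \<le> D/8" "\<bar>\<epsilon> * snd q\<bar> \<le> D/8"
      using eb PX(2) that by auto
    ultimately show ?thesis using that(3) Dpos unfolding xp_def by (auto simp: abs_if split: if_splits)
  qed
  define Xp where "Xp = xp ` P"
  have finXp: "finite Xp" unfolding Xp_def using assms(1) by auto
  define \<gamma> where "\<gamma> = Min ({\<bar>u - v\<bar> | u v. u \<in> Xp \<and> v \<in> Xp \<and> u \<noteq> v} \<union> {1}) / 2"
  have gpos: "\<gamma> > 0" unfolding \<gamma>_def using gap_min(1)[OF finXp] by simp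
  have ggap: "2 * \<gamma> \<le> \<bar>xp p - xp q\<bar>" if "p \<in> P" "q \<in> P" "p \<noteq> q" for p q
  proof -
    have "xp p \<noteq> xp q" using xinj that by blast
    then show ?thesis unfolding \<gamma>_def using gap_min(2)[OF finXp, of "xp p" "xp q"] that
      unfolding Xp_def by auto
  qed
  define f where "f = (\<lambda>(p::point, i::nat). (xp p, snd p + real i * T))"
  define rc where "rc R j = {a R + D/4 <..< b R - D/4} \<times> {c R + real j * T <..< d R + real j * T}"
    for R :: "point set" and j :: nat
  define pr where "pr q = {xp q - \<gamma> <..< xp q + \<gamma>} \<times> {snd q <..< snd q + real (k+1) * T}"
    for q :: point
  define g where "g = case_sum (\<lambda>(R,j). rc R j) pr"
  have abD: "a R + D/4 < b R - D/4" if "R \<in> \<R>" for R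
  proof -
    have "a R < b R" using rect that by blast
    moreover have "D \<le> \<bar>a R - b R\<bar>" using Dgap RX that calculation by (metis less_irrefl)
    ultimately show ?thesis using Dpos by (auto simp: abs_if split: if_splits)
  qed
  have cdT: "d R - c R < T" "\<bar>snd p - c R\<bar> < T" "\<bar>snd p - d R\<bar> < T" if "R \<in> \<R>" "p \<in> P" for R p
  proof -
    have "\<bar>c R\<bar> \<le> M" "\<bar>d R\<bar> \<le> M" "\<bar>snd p\<bar> \<le> M" using Mb RX PX that by auto
    then show "d R - c R < T" "\<bar>snd p - c R\<bar> < T" "\<bar>snd p - d R\<bar> < T" unfolding T_def by auto
  qed
  have open_rc: "open_rect (rc R j)" if "R \<in> \<R>" for R j
  proof -
    have "c R < d R" using rect that by blast
    then show ?thesis unfolding open_rect_def rc_def using abD[OF that]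
      by (intro exI[of _ "a R + D/4"] exI[of _ "b R - D/4"]
      exI[of _ "c R + real j * T"] exI[of _ "d R + real j * T"]) auto
  qed
  have open_pr: "open_rect (pr q)" for q
    unfolding open_rect_def pr_def using gpos Tpos by (intro exI[of _ "xp q - \<gamma>"] exI[of _ "xp q + \<gamma>"]
      exI[of _ "snd q"] exI[of _ "snd q + real (k+1) * T"]) auto
  let ?A = "tensorA P k" and ?B = "tensorB P \<R> k"
  have finA: "finite ?A" unfolding tensorA_def using assms(1) by auto
  have finB: "finite ?B" unfolding tensorB_def using assms(1,2) by auto
  have injf: "inj_on f ?A"
  proof (rule inj_onI)
    fix x y assume "x \<in> ?A" "y \<in> ?A" "f x = f y"
    then obtain p i q j where x: "x = (p,i)" "y = (q,j)" "p \<in> P" "q \<in> P" by (auto simp: tensorA_def)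
    then have "xp p = xp q" "snd p + real i * T = snd q + real j * T" using \<open>f x = f y\<close> by (auto simp: f_def)
    then have "p = q" using xinj x by blast
    then have "i = j" using \<open>snd p + real i * T = snd q + real j * T\<close> Tpos by simp
    then show "x = y" using x \<open>p = q\<close> by simp
  qed
  have injg: "inj_on g ?B"
  proof (rule inj_onI)
    fix x y assume xB: "x \<in> ?B" and yB: "y \<in> ?B" and gxy: "g x = g y"
    show "x = y"
    proof (cases x)
      case (Inl xr)
      then obtain R i where xR: "x = Inl (R,i)" "R \<in> \<R>" using xB by (auto simp: tensorB_def)
      have ne: "a R + D/4 < b R - D/4" "c R + real i * T < d R + real i * T" using abD xR rect by auto
      show ?thesis
      proof (cases y)
        case (Inl yr)
        then obtain R' j where yR: "y = Inl (R',j)" "R' \<in> \<R>" using yB by (auto simp: tensorB_def)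
        have "rc R i = rc R' j" using gxy xR yR by (simp add: g_def)
        then have eq: "a R + D/4 = a R' + D/4" "b R - D/4 = b R' - D/4"
          "c R + real i * T = c R' + real j * T" "d R + real i * T = d R' + real j * T"
          using box_eq[OF ne] unfolding rc_def by blast+
        have "\<bar>c R\<bar> \<le> M" "\<bar>c R'\<bar> \<le> M" using Mb RX xR yR by auto
        then have "\<bar>(real i - real j) * T\<bar> < T" using eq(3) unfolding T_def by (auto simp: algebra_simps)
        then have "\<bar>real i - real j\<bar> < 1" using Tpos by (simp add: abs_mult)
        then have "i = j" by linarith
        then have "a R = a R'" "b R = b R'" "c R = c R'" "d R = d R'" using eq by auto
        then have "R = R'" using rect xR yR by metis
        then show ?thesis using xR yR \<open>i = j\<close> by simp
      next
        case (Inr q)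
        have "rc R i = pr q" using gxy xR Inr by (simp add: g_def)
        then have "c R + real i * T = snd q" "d R + real i * T = snd q + real (k+1) * T"
          using box_eq[OF ne] unfolding rc_def pr_def by blast+
        then have "d R - c R = real (k+1) * T" by simp
        moreover have "real (k+1) * T \<ge> T" using Tpos by simp
        moreover have "q \<in> P" using yB Inr by (auto simp: tensorB_def)
        ultimately show ?thesis using cdT(1)[OF xR(2)] by fastforce
      qed
    next
      case (Inr q)
      then have qP: "q \<in> P" using xB by (auto simp: tensorB_def)
      have ne: "xp q - \<gamma> < xp q + \<gamma>" "snd q < snd q + real (k+1) * T" using gpos Tpos by auto
      show ?thesis
      proof (cases y)
        case (Inl yr)
        then obtain R j where yR: "y = Inl (R,j)" "R \<in> \<R>" using yB by (auto simp: tensorB_def)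
        have "pr q = rc R j" using gxy yR Inr by (simp add: g_def)
        then have "c R + real j * T = snd q" "d R + real j * T = snd q + real (k+1) * T"
          using box_eq[OF ne] unfolding rc_def pr_def by metis+
        then have "d R - c R = real (k+1) * T" by simp
        moreover have "real (k+1) * T \<ge> T" using Tpos by simp
        ultimately show ?thesis using cdT(1)[OF yR(2) qP] by simp
      next
        case (Inr q')
        then have q'P: "q' \<in> P" using yB by (auto simp: tensorB_def)
        have "pr q = pr q'" using gxy Inr \<open>x = Inr q\<close> by (simp add: g_def)
        then have "xp q - \<gamma> = xp q' - \<gamma>" using box_eq[OF ne] unfolding pr_def by metis
        then have "q = q'" using xinj qP q'P by simp
        then show ?thesis using Inr \<open>x = Inr q\<close> by simp
      qed
    qed
  qed
  have inc: "\<forall>x\<in>?A. \<forall>y\<in>?B. tensorE incidence x y \<longleftrightarrow> incidence (f x) (g y)"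
  proof (intro ballI)
    fix x y assume xA: "x \<in> ?A" and yB: "y \<in> ?B"
    then obtain p i where x: "x = (p,i)" "p \<in> P" "1 \<le> i" "i \<le> k" by (auto simp: tensorA_def)
    show "tensorE incidence x y \<longleftrightarrow> incidence (f x) (g y)"
    proof (cases y)
      case (Inl yr)
      then obtain R j where yR: "y = Inl (R,j)" "R \<in> \<R>" using yB by (auto simp: tensorB_def)
      have Req: "R = {a R<..<b R} \<times> {c R<..<d R}" using rect yR by blast
      have Y: "(c R + real j * T < snd p + real i * T \<and> snd p + real i * T < d R + real j * T)
               \<longleftrightarrow> (i = j \<and> c R < snd p \<and> snd p < d R)"
      proof (cases "i = j")
        case True then show ?thesis by simp
      next
        case False
        have b1: "\<bar>snd p - c R\<bar> < T" "\<bar>snd p - d R\<bar> < T" using cdT yR x by auto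
        show ?thesis
        proof (cases "i < j")
          case True
          then have "real i + 1 \<le> real j" by simp
          then have "real i * T + T \<le> real j * T" using Tpos
            by (metis distrib_right mult_1 mult_right_mono less_imp_le)
          then show ?thesis using b1 False by auto
        next
          case F2: False
          then have "real j + 1 \<le> real i" using False by simp
          then have "real j * T + T \<le> real i * T" using Tpos
            by (metis distrib_right mult_1 mult_right_mono less_imp_le)
          then show ?thesis using b1 False by auto
        qed
      qed
      have "tensorE incidence x y \<longleftrightarrow> i = j \<and> p \<in> R" using x yR by (simp add: incidence_def)
      also have "\<dots> \<longleftrightarrow> i = j \<and> (a R < fst p \<and> fst p < b R) \<and> c R < snd p \<and> snd p < d R"
        by (subst Req) (auto simp: mem_Times_iff)
      also have "\<dots> \<longleftrightarrow> (a R + D/4 < xp p \<and> xp p < b R - D/4) \<and>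
               (c R + real j * T < snd p + real i * T \<and> snd p + real i * T < d R + real j * T)"
        using xin[OF x(2) yR(2)] Y by blast
      also have "\<dots> \<longleftrightarrow> incidence (f x) (g y)"
        using x yR by (simp add: incidence_def f_def g_def rc_def)
      finally show ?thesis .
    next
      case (Inr q)
      then have qP: "q \<in> P" using yB by (auto simp: tensorB_def)
      have "tensorE incidence x y \<longleftrightarrow> q = p" using x Inr by simp
      also have "\<dots> \<longleftrightarrow> incidence (f x) (g y)"
      proof
        assume "q = p"
        have "real i * T > 0" "real i * T < real (k+1) * T" using x Tpos by auto
        then show "incidence (f x) (g y)" using x Inr \<open>q = p\<close> gpos
          by (simp add: incidence_def f_def g_def pr_def)
      next
        assume "incidence (f x) (g y)"
        then have "xp q - \<gamma> < xp p" "xp p < xp q + \<gamma>" using x Inr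
          by (simp_all add: incidence_def f_def g_def pr_def)
        then show "q = p" using ggap[OF qP x(2)] gpos by (cases "q = p") (auto simp: abs_if split: if_splits)
      qed
      finally show ?thesis .
    qed
  qed
  show ?thesis
  proof (intro exI conjI)
    show "finite (f ` ?A)" using finA by simp
    show "finite (g ` ?B)" using finB by simp
    show "\<forall>R\<in>g ` ?B. open_rect R"
    proof
      fix S assume "S \<in> g ` ?B"
      then obtain y where "y \<in> ?B" "S = g y" by blast
      then show "open_rect S" using open_rc open_pr by (auto simp: tensorB_def g_def)
    qed
    show "bip_iso ?A ?B (tensorE incidence) (f ` ?A) (g ` ?B) incidence"
      unfolding bip_iso_def using injf injg inc by (intro exI[of _ f] exI[of _ g]) (auto simp: bij_betw_def)
  qed
qed

end
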